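(* Let $r,t,\ell,m$ be integers with $1 \le t \le \ell \le m$ and $1 \le r \le \ell$. Then $$\mathfrak{w}_r(t;\ell,m) = \frac{q-1}{q}\sum_{s=1}^r q^{\binom{s}{2}}\left(\frac{[m]_q!}{[m-t]_q!} - (-1)^s \frac{[m-s]_q!}{[m-t]_q!} \right)q^{s(\ell-r)}q^{\binom{t-s}{2}}{r\brack s}_q {\ell-r\brack t-s}_q$$ $$=\frac{q-1}{q}\left(\mu_t(\ell,m) -\sum_{s=0}^r (-1)^s q^{\binom{s}{2}} \frac{[m-s]_q!}{[m-t]_q!}\,q^{s(\ell-r)}\,q^{\binom{t-s}{2}}{r\brack s}_q {\ell-r\brack t-s}_q\right),$$ where terms with $s>t$ vanish because the Gaussian binomial ${\ell-r\brack t-s}_q$ is then $0$.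
   Context: $q$ is a prime power. $\mu_t(\ell,m)$ is the number of $\ell\times m$ matrices over $\mathbb{F}_q$ of rank exactly $t$. For an $\ell\times m$ matrix $M=(m_{ij})$, $\tau_r(M)=m_{11}+\cdots+m_{rr}$, and $\mathfrak w_r(t;\ell,m)$ is the number of $\ell\times m$ matrices $M$ over $\mathbb{F}_q$ with $\mathrm{rk}(M)=t$ and $\tau_r(M)\ne 0$. The Gaussian factorial is $[n]_q!=\prod_{i=1}^n(q^i-1)$ (with $[0]_q!=1$), and ${n\brack k}_q$ is the Gaussian binomial coefficient, equal to $0$ if $k<0$ or $k>n$. *)

theory Defs
  imports Complex_Main "Jordan_Normal_Form.DL_Rank"
begin

text \<open>Matrices over the finite field 'a (q = CARD('a)) are JNF matrices;
  rank is the JNF rank (dimension of the column space).\<close>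

definition mat_rank :: "'a::field mat \<Rightarrow> nat" where
  "mat_rank A = vec_space.rank (dim_row A) A"

definition mu :: "'a::{finite,field} itself \<Rightarrow> nat \<Rightarrow> nat \<Rightarrow> nat \<Rightarrow> nat" where
  "mu _ t l m = card {A :: 'a mat. A \<in> carrier_mat l m \<and> mat_rank A = t}"

text \<open>tau_r(M) = m_11 + ... + m_rr (0-indexed here).\<close>
definition tau :: "nat \<Rightarrow> 'a::field mat \<Rightarrow> 'a" where
  "tau r A = (\<Sum>i<r. A $$ (i, i))"

definition wcount :: "'a::{finite,field} itself \<Rightarrow> nat \<Rightarrow> nat \<Rightarrow> nat \<Rightarrow> nat \<Rightarrow> nat" where
  "wcount _ r t l m =
     card {A :: 'a mat. A \<in> carrier_mat l m \<and> mat_rank A = t \<and> tau r A \<noteq> 0}"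

definition gfact :: "real \<Rightarrow> nat \<Rightarrow> real" where
  "gfact q n = (\<Prod>i=1..n. q ^ i - 1)"

definition gbinom :: "real \<Rightarrow> int \<Rightarrow> int \<Rightarrow> real" where
  "gbinom q n k = (if 0 \<le> k \<and> k \<le> n
     then gfact q (nat n) / (gfact q (nat k) * gfact q (nat (n - k))) else 0)"

end

theory Submission
  imports Defs
begin

lemma card_img_rank:
  fixes A :: "'a::{finite,field} mat"
  assumes A: "A \<in> carrier_mat n k"
  shows "card {A *\<^sub>v x | x. x \<in> carrier_vec k} = card (UNIV::'a set) ^ mat_rank A"
proof -
  interpret V: vec_space "TYPE('a)" n .
  define S where "S = set (cols A)"
  have SC: "S \<subseteq> carrier_vec n" using A unfolding S_def cols_def by auto
  have fS: "finite S" unfolding S_def by simp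
  have vs: "vectorspace class_ring (V.span_vs S)"
    using SC V.span_is_subspace subspace_def V.subspace_is_vs by simp
  have fd: "vectorspace.fin_dim class_ring (V.span_vs S)"
    using V.fin_dim_span_cols[OF A] unfolding S_def .
  obtain \<beta> where b: "finite \<beta>" "vectorspace.basis class_ring (V.span_vs S) \<beta>"
    using vectorspace.finite_basis_exists[OF vs fd] by blast
  have dimb: "vectorspace.dim class_ring (V.span_vs S) = card \<beta>"
    using vectorspace.dim_basis[OF vs b] .
  have bC: "\<beta> \<subseteq> V.span S"
    using b(2) unfolding vectorspace.basis_def[OF vs] by auto
  have crit: "\<forall>v. v \<in> V.span S \<longrightarrow> (\<exists>! a. a \<in> \<beta> \<rightarrow>\<^sub>E carrier class_ring \<and> module.lincomb (V.span_vs S) a \<beta> = v)"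
    using vectorspace.basis_criterion[OF vs b(1)] bC b(2) by auto
  have mod: "module class_ring (V.span_vs S)" using vs unfolding vectorspace_def by auto
  have bij: "bij_betw (\<lambda>a. module.lincomb (V.span_vs S) a \<beta>) (\<beta> \<rightarrow>\<^sub>E (UNIV::'a set)) (V.span S)"
  proof (rule bij_betwI')
    fix a b assume "a \<in> \<beta> \<rightarrow>\<^sub>E (UNIV::'a set)" "b \<in> \<beta> \<rightarrow>\<^sub>E (UNIV::'a set)"
    note ab = this
    have cl: "module.lincomb (V.span_vs S) a \<beta> \<in> V.span S"
      using module.lincomb_closed[OF mod, of \<beta> a] bC ab by (auto simp: class_ring_simps)
    have ac: "a \<in> \<beta> \<rightarrow>\<^sub>E carrier class_ring" "b \<in> \<beta> \<rightarrow>\<^sub>E carrier class_ring"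
      using ab by (auto simp: class_ring_simps)
    show "(module.lincomb (V.span_vs S) a \<beta> = module.lincomb (V.span_vs S) b \<beta>) = (a = b)"
    proof
      assume eq: "module.lincomb (V.span_vs S) a \<beta> = module.lincomb (V.span_vs S) b \<beta>"
      from crit cl have "\<exists>! c. c \<in> \<beta> \<rightarrow>\<^sub>E carrier class_ring \<and> module.lincomb (V.span_vs S) c \<beta> = module.lincomb (V.span_vs S) a \<beta>" by blast
      then show "a = b" using ac eq by metis
    qed simp
  next
    fix a assume "a \<in> \<beta> \<rightarrow>\<^sub>E (UNIV::'a set)"
    then show "module.lincomb (V.span_vs S) a \<beta> \<in> V.span S"
      using module.lincomb_closed[OF mod, of \<beta> a] bC by (auto simp: class_ring_simps)
  next
    fix v assume "v \<in> V.span S"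
    then show "\<exists>a\<in>\<beta> \<rightarrow>\<^sub>E UNIV. v = module.lincomb (V.span_vs S) a \<beta>"
      using crit by (metis class_ring_simps(1))
  qed
  have "card (V.span S) = card (UNIV::'a set) ^ card \<beta>"
    using bij_betw_same_card[OF bij] b(1) by (simp add: card_PiE prod_constant)
  moreover have "mat_rank A = card \<beta>"
  proof -
    have "mat_rank A = V.rank A" using A by (simp add: mat_rank_def)
    also have "\<dots> = card \<beta>" unfolding V.rank_def using dimb unfolding S_def .
    finally show ?thesis .
  qed
  moreover have "V.span S = {A *\<^sub>v x | x. x \<in> carrier_vec k}"
    using V.col_space_eq[OF A] A unfolding V.col_space_def S_def by auto
  ultimately show ?thesis by simp
qed

definition img :: "'a::field mat \<Rightarrow> 'a vec set" where
  "img A = (\<lambda>x. A *\<^sub>v x) ` carrier_vec (dim_col A)"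

lemma Q_ge2: "2 \<le> card (UNIV :: 'a::{finite,field} set)"
proof -
  have "card {0::'a, 1} \<le> card (UNIV :: 'a set)" by (rule card_mono) auto
  then show ?thesis by simp
qed

lemma card_img:
  fixes A :: "'a::{finite,field} mat"
  assumes "A \<in> carrier_mat n k"
  shows "card (img A) = card (UNIV::'a set) ^ mat_rank A"
  using card_img_rank[OF assms] assms unfolding img_def by (simp add: setcompr_eq_image)

lemma img_carrier: "A \<in> carrier_mat n k \<Longrightarrow> img A \<subseteq> carrier_vec n"
  unfolding img_def by auto

lemma img_zero: "A \<in> carrier_mat n k \<Longrightarrow> 0\<^sub>v n \<in> img A"
  unfolding img_def by (rule image_eqI[of _ _ "0\<^sub>v k"]) auto

lemma img_add: "A \<in> carrier_mat n k \<Longrightarrow> x \<in> img A \<Longrightarrow> y \<in> img A \<Longrightarrow> x + y \<in> img A"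
  unfolding img_def
  by (auto intro!: image_eqI simp: mult_add_distrib_mat_vec[symmetric])

lemma img_smult: "A \<in> carrier_mat n k \<Longrightarrow> (x::'a::field vec) \<in> img A \<Longrightarrow> a \<cdot>\<^sub>v x \<in> img A"
  unfolding img_def
  by (auto intro!: image_eqI simp: mult_mat_vec[symmetric])

lemma img_diff: "A \<in> carrier_mat n k \<Longrightarrow> (x::'a::field vec) \<in> img A \<Longrightarrow> y \<in> img A \<Longrightarrow> x - y \<in> img A"
proof -
  assume A: "A \<in> carrier_mat n k" and x: "x \<in> img A" and y: "y \<in> img A"
  have "(-1) \<cdot>\<^sub>v y \<in> img A" using img_smult[OF A y] .
  from img_add[OF A x this] have "x + (-1) \<cdot>\<^sub>v y \<in> img A" .
  moreover have "x + (-1) \<cdot>\<^sub>v y = x - y"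
    using img_carrier[OF A] x y by (intro eq_vecI) auto
  ultimately show ?thesis by simp
qed

definition ccol :: "'a vec \<Rightarrow> 'a mat \<Rightarrow> 'a mat" where
  "ccol c R = mat (dim_row R) (Suc (dim_col R)) (\<lambda>(i,j). if j = 0 then c $ i else R $$ (i, j - 1))"

lemma dim_ccol[simp]: "dim_row (ccol c R) = dim_row R" "dim_col (ccol c R) = Suc (dim_col R)"
  unfolding ccol_def by auto

lemma ccol_carrier[simp]: "R \<in> carrier_mat l k \<Longrightarrow> ccol c R \<in> carrier_mat l (Suc k)"
  unfolding ccol_def by auto

lemma ccol_mult:
  fixes R :: "'a::field mat"
  assumes R: "R \<in> carrier_mat l k" and c: "c \<in> carrier_vec l" and y: "y \<in> carrier_vec k"
  shows "ccol c R *\<^sub>v vCons a y = a \<cdot>\<^sub>v c + R *\<^sub>v y"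
proof (rule eq_vecI)
  fix i assume "i < dim_vec (a \<cdot>\<^sub>v c + R *\<^sub>v y)"
  then have i: "i < l" using R by simp
  have "(ccol c R *\<^sub>v vCons a y) $ i = (\<Sum>j<Suc k. ccol c R $$ (i,j) * vCons a y $ j)"
    using i R y unfolding ccol_def by (simp add: scalar_prod_def row_def atLeast0LessThan)
  also have "\<dots> = c $ i * a + (\<Sum>j<k. R $$ (i,j) * y $ j)"
    unfolding sum.lessThan_Suc_shift using i R y by (simp add: ccol_def)
  also have "\<dots> = (a \<cdot>\<^sub>v c + R *\<^sub>v y) $ i"
    using i R y c by (simp add: scalar_prod_def row_def atLeast0LessThan mult.commute)
  finally show "(ccol c R *\<^sub>v vCons a y) $ i = (a \<cdot>\<^sub>v c + R *\<^sub>v y) $ i" .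
qed (use R c in auto)

lemma carrier_vec_Suc: "carrier_vec (Suc n) = (\<lambda>(a,v). vCons a v) ` (UNIV \<times> carrier_vec n)"
proof
  show "carrier_vec (Suc n) \<subseteq> (\<lambda>(a,v). vCons a v) ` (UNIV \<times> carrier_vec n)"
  proof
    fix x :: "'b vec" assume x: "x \<in> carrier_vec (Suc n)"
    then obtain a w where "x = vCons a w" by (cases x) auto
    with x show "x \<in> (\<lambda>(a,v). vCons a v) ` (UNIV \<times> carrier_vec n)" by auto
  qed
qed auto

lemma img_ccol:
  fixes R :: "'a::field mat"
  assumes R: "R \<in> carrier_mat l k" and c: "c \<in> carrier_vec l"
  shows "img (ccol c R) = {a \<cdot>\<^sub>v c + y | a y. y \<in> img R}"
proof -
  have "img (ccol c R) = (\<lambda>x. ccol c R *\<^sub>v x) ` carrier_vec (Suc k)"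
    unfolding img_def using R by simp
  also have "\<dots> = (\<lambda>(a,v). a \<cdot>\<^sub>v c + R *\<^sub>v v) ` (UNIV \<times> carrier_vec k)"
    unfolding carrier_vec_Suc image_image using ccol_mult[OF R c]
    by (intro image_cong) auto
  also have "\<dots> = {a \<cdot>\<^sub>v c + y | a y. y \<in> img R}"
    unfolding img_def using R by auto
  finally show ?thesis .
qed

lemma card_carrier_vec: "card (carrier_vec n :: 'a::{finite,field} vec set) = card (UNIV::'a set) ^ n"
proof (induction n)
  case 0
  have "carrier_vec 0 = {0\<^sub>v 0 :: 'a vec}" unfolding carrier_vec_def by auto
  then show ?case by simp
next
  case (Suc n)
  have inj: "inj_on (\<lambda>(a,v). vCons a v) (UNIV \<times> (carrier_vec n :: 'a vec set))"
    by (rule inj_onI) auto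
  show ?case unfolding carrier_vec_Suc card_image[OF inj] card_cartesian_product Suc by simp
qed

lemma finite_carrier_vec[simp]: "finite (carrier_vec n :: 'a::{finite,field} vec set)"
  by (rule card_ge_0_finite) (simp add: card_carrier_vec finite_UNIV_card_ge_0)

lemma vec_smult_zero_add: "y \<in> carrier_vec n \<Longrightarrow> c \<in> carrier_vec n \<Longrightarrow> (0::'a::field) \<cdot>\<^sub>v c + y = y"
  by (intro eq_vecI) auto

lemma rank_ccol:
  fixes R :: "'a::{finite,field} mat"
  assumes R: "R \<in> carrier_mat l k" and c: "c \<in> carrier_vec l"
  shows "mat_rank (ccol c R) = (if c \<in> img R then mat_rank R else Suc (mat_rank R))"
proof -
  let ?Q = "card (UNIV::'a set)"
  have Q: "1 < ?Q" using Q_ge2[where 'a='a] by simp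
  have C: "ccol c R \<in> carrier_mat l (Suc k)" using R by simp
  have W: "img R \<subseteq> carrier_vec l" using img_carrier[OF R] .
  show ?thesis
  proof (cases "c \<in> img R")
    case True
    have "img (ccol c R) = img R"
    proof
      show "img (ccol c R) \<subseteq> img R"
        unfolding img_ccol[OF R c] using img_add[OF R] img_smult[OF R True] by auto
      show "img R \<subseteq> img (ccol c R)"
        unfolding img_ccol[OF R c]
      proof
        fix y assume y: "y \<in> img R"
        then have "y = 0 \<cdot>\<^sub>v c + y" using W c vec_smult_zero_add by (metis subsetD)
        with y show "y \<in> {a \<cdot>\<^sub>v c + y |a y. y \<in> img R}" by blast
      qed
    qed
    then have "?Q ^ mat_rank (ccol c R) = ?Q ^ mat_rank R"
      using card_img[OF C] card_img[OF R] by simp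
    then show ?thesis using True Q by (simp add: power_inject_exp)
  next
    case False
    have eq: "img (ccol c R) = (\<lambda>(a,y). a \<cdot>\<^sub>v c + y) ` (UNIV \<times> img R)"
      unfolding img_ccol[OF R c] by auto
    have inj: "inj_on (\<lambda>(a,y). a \<cdot>\<^sub>v c + y) (UNIV \<times> img R)"
    proof (rule inj_onI, clarsimp)
      fix a b :: 'a and y z
      assume y: "y \<in> img R" and z: "z \<in> img R" and e: "a \<cdot>\<^sub>v c + y = b \<cdot>\<^sub>v c + z"
      have yc: "y \<in> carrier_vec l" and zc: "z \<in> carrier_vec l" using y z W by auto
      have ab: "a = b"
      proof (rule ccontr)
        assume ab: "a \<noteq> b"
        have "c = (1 / (a - b)) \<cdot>\<^sub>v (z - y)"
        proof (rule eq_vecI)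
          fix i assume "i < dim_vec ((1 / (a - b)) \<cdot>\<^sub>v (z - y))"
          then have i: "i < l" using zc yc by simp
          have "(a \<cdot>\<^sub>v c + y) $ i = (b \<cdot>\<^sub>v c + z) $ i" using e by simp
          then have "a * c $ i + y $ i = b * c $ i + z $ i" using i c yc zc by simp
          then have "(a - b) * c $ i = z $ i - y $ i" by (simp add: algebra_simps)
          then show "c $ i = ((1 / (a - b)) \<cdot>\<^sub>v (z - y)) $ i"
            using i zc yc ab by (simp add: field_simps)
        qed (use c zc yc in auto)
        moreover have "(1 / (a - b)) \<cdot>\<^sub>v (z - y) \<in> img R"
          using img_smult[OF R img_diff[OF R z y]] .
        ultimately show False using False by simp
      qed
      have "y = z"
      proof (rule eq_vecI)
        fix i assume "i < dim_vec z"
        then have i: "i < l" using zc by simp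
        have "(a \<cdot>\<^sub>v c + y) $ i = (b \<cdot>\<^sub>v c + z) $ i" using e by simp
        then show "y $ i = z $ i" using i c yc zc ab by simp
      qed (use yc zc in auto)
      with ab show "a = b \<and> y = z" by simp
    qed
    have fin: "finite (img R)" unfolding img_def by simp
    have "card (img (ccol c R)) = ?Q * card (img R)"
      unfolding eq card_image[OF inj] card_cartesian_product by simp
    then have "?Q ^ mat_rank (ccol c R) = ?Q ^ Suc (mat_rank R)"
      using card_img[OF C] card_img[OF R] by simp
    then have "mat_rank (ccol c R) = Suc (mat_rank R)" using power_inject_exp[OF Q] by blast
    then show ?thesis using False by simp
  qed
qed

definition zrow :: "'a::zero mat \<Rightarrow> 'a mat" where
  "zrow R = mat (Suc (dim_row R)) (dim_col R) (\<lambda>(i,j). if i = 0 then 0 else R $$ (i - 1, j))"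

lemma dim_zrow[simp]: "dim_row (zrow R) = Suc (dim_row R)" "dim_col (zrow R) = dim_col R"
  unfolding zrow_def by auto

lemma zrow_carrier[simp]: "R \<in> carrier_mat l k \<Longrightarrow> zrow R \<in> carrier_mat (Suc l) k"
  unfolding zrow_def by auto

lemma zrow_mult:
  fixes R :: "'a::field mat"
  assumes R: "R \<in> carrier_mat l k" and x: "x \<in> carrier_vec k"
  shows "zrow R *\<^sub>v x = vCons 0 (R *\<^sub>v x)"
proof (rule eq_vecI)
  fix i assume "i < dim_vec (vCons 0 (R *\<^sub>v x))"
  then have i: "i < Suc l" using R by simp
  show "(zrow R *\<^sub>v x) $ i = vCons 0 (R *\<^sub>v x) $ i"
  proof (cases i)
    case 0
    then show ?thesis using R x by (simp add: zrow_def scalar_prod_def row_def)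
  next
    case (Suc i')
    then show ?thesis using R x i by (simp add: zrow_def scalar_prod_def row_def)
  qed
qed (use R in auto)

lemma img_zrow:
  fixes R :: "'a::field mat"
  assumes R: "R \<in> carrier_mat l k"
  shows "img (zrow R) = vCons 0 ` img R"
  unfolding img_def using R zrow_mult[OF R] by (auto simp: image_image)

lemma rank_zrow:
  fixes R :: "'a::{finite,field} mat"
  assumes R: "R \<in> carrier_mat l k"
  shows "mat_rank (zrow R) = mat_rank R"
proof -
  let ?Q = "card (UNIV::'a set)"
  have Q: "1 < ?Q" using Q_ge2[where 'a='a] by simp
  have "card (img (zrow R)) = card (img R)"
    unfolding img_zrow[OF R] by (rule card_image) (auto intro: inj_onI)
  then have "?Q ^ mat_rank (zrow R) = ?Q ^ mat_rank R"
    using card_img[OF zrow_carrier[OF R]] card_img[OF R] by simp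
  then show ?thesis using Q by (simp add: power_inject_exp)
qed

lemma rank_smult:
  fixes A :: "'a::{finite,field} mat"
  assumes A: "A \<in> carrier_mat l k" and a: "a \<noteq> 0"
  shows "mat_rank (a \<cdot>\<^sub>m A) = mat_rank A"
proof -
  let ?Q = "card (UNIV::'a set)"
  have Q: "1 < ?Q" using Q_ge2[where 'a='a] by simp
  have aA: "a \<cdot>\<^sub>m A \<in> carrier_mat l k" using A by simp
  have m: "(a \<cdot>\<^sub>m A) *\<^sub>v x = A *\<^sub>v (a \<cdot>\<^sub>v x)" if x: "x \<in> carrier_vec k" for x
    using A x by (intro eq_vecI) (auto simp: scalar_prod_def row_def sum_distrib_left ac_simps)
  have "img (a \<cdot>\<^sub>m A) = img A"
  proof
    show "img (a \<cdot>\<^sub>m A) \<subseteq> img A" unfolding img_def using A m by auto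
    show "img A \<subseteq> img (a \<cdot>\<^sub>m A)"
    proof
      fix y assume "y \<in> img A"
      then obtain x where x: "x \<in> carrier_vec k" "y = A *\<^sub>v x" unfolding img_def using A by auto
      have "(1/a) \<cdot>\<^sub>v x \<in> carrier_vec k" using x by simp
      moreover have "a \<cdot>\<^sub>v ((1/a) \<cdot>\<^sub>v x) = x" using x a by (intro eq_vecI) auto
      ultimately show "y \<in> img (a \<cdot>\<^sub>m A)" unfolding img_def using x m aA
        by (metis carrier_matD(2) image_eqI)
    qed
  qed
  then have "?Q ^ mat_rank (a \<cdot>\<^sub>m A) = ?Q ^ mat_rank A"
    using card_img[OF aA] card_img[OF A] by simp
  then show ?thesis using Q by (simp add: power_inject_exp)
qed

definition dropcol :: "'a mat \<Rightarrow> 'a mat" where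
  "dropcol A = mat (dim_row A) (dim_col A - 1) (\<lambda>(i,j). A $$ (i, Suc j))"

lemma ccol_dropcol:
  assumes A: "A \<in> carrier_mat l (Suc k)"
  shows "A = ccol (col A 0) (dropcol A)"
  using A by (intro eq_matI) (auto simp: ccol_def dropcol_def)

lemma ccol_inj:
  assumes "R \<in> carrier_mat l k" "R' \<in> carrier_mat l k" "c \<in> carrier_vec l" "c' \<in> carrier_vec l"
    and e: "ccol c R = ccol c' R'"
  shows "c = c' \<and> R = R'"
proof
  show "c = c'"
  proof (rule eq_vecI)
    fix i assume "i < dim_vec c'"
    then have i: "i < l" using assms by simp
    have "ccol c R $$ (i, 0) = ccol c' R' $$ (i, 0)" using e by simp
    then show "c $ i = c' $ i" using i assms by (simp add: ccol_def)
  qed (use assms in auto)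
  show "R = R'"
  proof (rule eq_matI)
    fix i j assume "i < dim_row R'" "j < dim_col R'"
    then have i: "i < l" "j < k" using assms by auto
    have "ccol c R $$ (i, Suc j) = ccol c' R' $$ (i, Suc j)" using e by simp
    then show "R $$ (i, j) = R' $$ (i, j)" using i assms by (simp add: ccol_def)
  qed (use assms in auto)
qed

lemma carrier_mat_Suc_col:
  "carrier_mat l (Suc k) = (\<lambda>(c,R). ccol c R) ` (carrier_vec l \<times> (carrier_mat l k :: 'a mat set))"
proof
  show "carrier_mat l (Suc k) \<subseteq> (\<lambda>(c,R). ccol c R) ` (carrier_vec l \<times> carrier_mat l k)"
  proof
    fix A assume A: "A \<in> carrier_mat l (Suc k)"
    have "col A 0 \<in> carrier_vec l" "dropcol A \<in> carrier_mat l k"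
      using A by (auto simp: dropcol_def)
    then show "A \<in> (\<lambda>(c,R). ccol c R) ` (carrier_vec l \<times> carrier_mat l k)"
      using ccol_dropcol[OF A] by (intro image_eqI[of _ _ "(col A 0, dropcol A)"]) auto
  qed
qed auto

lemma finite_carrier_mat[simp]: "finite (carrier_mat l k :: 'a::{finite,field} mat set)"
proof (induction k)
  case 0
  have "carrier_mat l 0 \<subseteq> {0\<^sub>m l 0 :: 'a mat}" by (auto intro: eq_matI)
  then show ?case using finite_subset by blast
next
  case (Suc k)
  then show ?case unfolding carrier_mat_Suc_col by simp
qed

lemma card_split:
  fixes P :: "'a::{finite,field} mat \<Rightarrow> bool"
  shows "card {A \<in> carrier_mat l (Suc k). P A} =
    (\<Sum>R\<in>carrier_mat l k. card {c \<in> carrier_vec l. P (ccol c R)})"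
proof -
  let ?S = "SIGMA R:carrier_mat l k. {c \<in> carrier_vec l. P (ccol c R)}"
  have eq: "{A \<in> carrier_mat l (Suc k). P A} = (\<lambda>(R,c). ccol c R) ` ?S"
  proof
    show "{A \<in> carrier_mat l (Suc k). P A} \<subseteq> (\<lambda>(R,c). ccol c R) ` ?S"
    proof
      fix A assume "A \<in> {A \<in> carrier_mat l (Suc k). P A}"
      then have A: "A \<in> carrier_mat l (Suc k)" "P A" by auto
      have "col A 0 \<in> carrier_vec l" "dropcol A \<in> carrier_mat l k"
        using A by (auto simp: dropcol_def)
      then show "A \<in> (\<lambda>(R,c). ccol c R) ` ?S"
        using ccol_dropcol[OF A(1)] A(2) by (intro image_eqI[of _ _ "(dropcol A, col A 0)"]) auto
    qed
  qed auto
  have inj: "inj_on (\<lambda>(R,c). ccol c R) ?S"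
  proof (rule inj_onI)
    fix x y assume "x \<in> ?S" "y \<in> ?S" "(\<lambda>(R,c). ccol c R) x = (\<lambda>(R,c). ccol c R) y"
    then show "x = y" using ccol_inj[of "fst x" l k "fst y" "snd x" "snd y"]
      by (cases x, cases y) auto
  qed
  have "card {A \<in> carrier_mat l (Suc k). P A} = card ?S"
    unfolding eq card_image[OF inj] ..
  also have "\<dots> = (\<Sum>R\<in>carrier_mat l k. card {c \<in> carrier_vec l. P (ccol c R)})"
    by (rule card_SigmaI) auto
  finally show ?thesis .
qed

lemma zrow_inj: "R \<in> carrier_mat l k \<Longrightarrow> R' \<in> carrier_mat l k \<Longrightarrow> zrow R = zrow R' \<Longrightarrow> R = R'"
proof (rule eq_matI)
  fix i j assume R: "R \<in> carrier_mat l k" "R' \<in> carrier_mat l k" and e: "zrow R = zrow R'"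
    and ij: "i < dim_row R'" "j < dim_col R'"
  have "zrow R $$ (Suc i, j) = zrow R' $$ (Suc i, j)" using e by simp
  then show "R $$ (i, j) = R' $$ (i, j)" using R ij by (simp add: zrow_def)
qed auto

definition droprow :: "'a mat \<Rightarrow> 'a mat" where
  "droprow A = mat (dim_row A - 1) (dim_col A) (\<lambda>(i,j). A $$ (Suc i, j))"

lemma zrow_set:
  "{R \<in> carrier_mat (Suc l) k. \<forall>j<k. R $$ (0,j) = (0::'a::zero)} = zrow ` carrier_mat l k"
proof
  show "{R \<in> carrier_mat (Suc l) k. \<forall>j<k. R $$ (0,j) = (0::'a)} \<subseteq> zrow ` carrier_mat l k"
  proof
    fix R :: "'a mat" assume "R \<in> {R \<in> carrier_mat (Suc l) k. \<forall>j<k. R $$ (0,j) = (0::'a)}"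
    then have R: "R \<in> carrier_mat (Suc l) k" "\<forall>j<k. R $$ (0,j) = 0" by auto
    have "R = zrow (droprow R)"
      using R by (intro eq_matI) (auto simp: zrow_def droprow_def)
    moreover have "droprow R \<in> carrier_mat l k" using R by (auto simp: droprow_def)
    ultimately show "R \<in> zrow ` carrier_mat l k" by blast
  qed
  show "zrow ` carrier_mat l k \<subseteq> {R \<in> carrier_mat (Suc l) k. \<forall>j<k. R $$ (0,j) = (0::'a)}"
    by (auto simp: zrow_def)
qed

lemma card_vec_first:
  "card {c \<in> carrier_vec (Suc n). c $ 0 = (b::'a::{finite,field})} = card (UNIV::'a set) ^ n"
proof -
  have "{c \<in> carrier_vec (Suc n). c $ 0 = b} = vCons b ` carrier_vec n"
    unfolding carrier_vec_Suc by auto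
  moreover have "inj_on (vCons b) (carrier_vec n :: 'a vec set)" by (rule inj_onI) auto
  ultimately show ?thesis by (simp add: card_image card_carrier_vec)
qed

lemma sum_if_const:
  assumes "finite C"
  shows "(\<Sum>R\<in>C. if P R then (x::real) else 0) = real (card {R\<in>C. P R}) * x"
proof -
  have "(\<Sum>R\<in>C. if P R then x else 0) = (\<Sum>R\<in>{R\<in>C. P R}. x)"
    by (rule sum.inter_filter[OF assms, symmetric])
  then show ?thesis by simp
qed

lemma card_rank_ccol:
  fixes R :: "'a::{finite,field} mat"
  assumes R: "R \<in> carrier_mat l k"
  shows "real (card {c \<in> carrier_vec l. mat_rank (ccol c R) = t}) =
    (if mat_rank R = t then real (card (UNIV::'a set)) ^ t else 0) +
    (if Suc (mat_rank R) = t then real (card (UNIV::'a set)) ^ l - real (card (UNIV::'a set)) ^ mat_rank R else 0)"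
proof -
  let ?Q = "card (UNIV::'a set)"
  have W: "img R \<subseteq> carrier_vec l" using img_carrier[OF R] .
  have ci: "card (img R) = ?Q ^ mat_rank R" using card_img[OF R] .
  have rk: "\<And>c. c \<in> carrier_vec l \<Longrightarrow> mat_rank (ccol c R) = (if c \<in> img R then mat_rank R else Suc (mat_rank R))"
    using rank_ccol[OF R] by simp
  consider (a) "mat_rank R = t" | (b) "Suc (mat_rank R) = t" | (c) "mat_rank R \<noteq> t" "Suc (mat_rank R) \<noteq> t" by blast
  then show ?thesis
  proof cases
    case a
    then have "{c \<in> carrier_vec l. mat_rank (ccol c R) = t} = img R" using rk W by (auto split: if_splits)
    then show ?thesis using a ci by simp
  next
    case b
    then have "{c \<in> carrier_vec l. mat_rank (ccol c R) = t} = carrier_vec l - img R" using rk W by (auto split: if_splits)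
    moreover have "card (carrier_vec l - img R) = ?Q ^ l - ?Q ^ mat_rank R"
      using card_Diff_subset[OF _ W] ci by (simp add: card_carrier_vec finite_subset[OF W])
    moreover have "?Q ^ mat_rank R \<le> ?Q ^ l"
      using card_mono[OF _ W] ci by (simp add: card_carrier_vec)
    ultimately show ?thesis using b by (simp add: of_nat_diff)
  next
    case c
    then have "{c \<in> carrier_vec l. mat_rank (ccol c R) = t} = {}" using rk by auto
    then show ?thesis using c by simp
  qed
qed

lemma mu_def': "mu TYPE('a::{finite,field}) t l m = card {A \<in> (carrier_mat l m :: 'a mat set). mat_rank A = t}"
  unfolding mu_def by simp

lemma mu_Suc:
  "real (mu TYPE('a::{finite,field}) t l (Suc k)) =
     real (card (UNIV::'a set)) ^ t * real (mu TYPE('a) t l k) +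
     (if t = 0 then 0 else (real (card (UNIV::'a set)) ^ l - real (card (UNIV::'a set)) ^ (t - 1)) * real (mu TYPE('a) (t - 1) l k))"
proof -
  let ?Q = "real (card (UNIV::'a set))"
  let ?C = "carrier_mat l k :: 'a mat set"
  have "real (mu TYPE('a) t l (Suc k)) = (\<Sum>R\<in>?C. real (card {c \<in> carrier_vec l. mat_rank (ccol c R) = t}))"
    unfolding mu_def' card_split by simp
  also have "\<dots> = (\<Sum>R\<in>?C. (if mat_rank R = t then ?Q ^ t else 0) +
      (if mat_rank R = t - 1 \<and> t \<noteq> 0 then ?Q ^ l - ?Q ^ (t - 1) else 0))"
    by (rule sum.cong) (auto simp: card_rank_ccol)
  also have "\<dots> = real (card {R\<in>?C. mat_rank R = t}) * ?Q ^ t +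
      real (card {R\<in>?C. mat_rank R = t - 1 \<and> t \<noteq> 0}) * (?Q ^ l - ?Q ^ (t - 1))"
    unfolding sum.distrib by (simp add: sum_if_const)
  also have "\<dots> = ?Q ^ t * real (mu TYPE('a) t l k) +
     (if t = 0 then 0 else (?Q ^ l - ?Q ^ (t - 1)) * real (mu TYPE('a) (t - 1) l k))"
    unfolding mu_def' by auto
  finally show ?thesis .
qed

lemma img_nocols: "A \<in> carrier_mat l 0 \<Longrightarrow> img A = {0\<^sub>v l}"
  unfolding img_def
proof -
  assume A: "A \<in> carrier_mat l 0"
  have "carrier_vec 0 = {0\<^sub>v 0 :: 'a vec}" unfolding carrier_vec_def by auto
  moreover have "A *\<^sub>v 0\<^sub>v 0 = 0\<^sub>v l" using A by (intro eq_vecI) (auto simp: scalar_prod_def)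
  ultimately show "(*\<^sub>v) A ` carrier_vec (dim_col A) = {0\<^sub>v l}" using A by simp
qed

lemma mu_0: "mu TYPE('a::{finite,field}) t l 0 = (if t = 0 then 1 else 0)"
proof -
  let ?Q = "card (UNIV::'a set)"
  have Q: "1 < ?Q" using Q_ge2[where 'a='a] by simp
  have C: "carrier_mat l 0 = {0\<^sub>m l 0 :: 'a mat}" by (auto intro: eq_matI)
  have "card (img (0\<^sub>m l 0 :: 'a mat)) = 1" using img_nocols[of "0\<^sub>m l 0 :: 'a mat" l] by simp
  then have "?Q ^ mat_rank (0\<^sub>m l 0 :: 'a mat) = ?Q ^ 0" using card_img[of "0\<^sub>m l 0 :: 'a mat" l 0] by simp
  then have "mat_rank (0\<^sub>m l 0 :: 'a mat) = 0" using power_inject_exp[OF Q] by blast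
  then have "{A \<in> carrier_mat l 0. mat_rank A = t} = (if t = 0 then {0\<^sub>m l 0 :: 'a mat} else {})"
    unfolding C by auto
  then show ?thesis unfolding mu_def' by simp
qed

definition Ncnt :: "'a::{finite,field} itself \<Rightarrow> nat \<Rightarrow> nat \<Rightarrow> nat \<Rightarrow> nat \<Rightarrow> 'a \<Rightarrow> nat" where
  "Ncnt _ r t l m a = card {A \<in> (carrier_mat l m :: 'a mat set). mat_rank A = t \<and> tau r A = a}"

definition Dn :: "'a::{finite,field} itself \<Rightarrow> nat \<Rightarrow> nat \<Rightarrow> nat \<Rightarrow> nat \<Rightarrow> real" where
  "Dn T r t l m = real (Ncnt T r t l m 0) - real (Ncnt T r t l m 1)"

lemma D_base: "Dn TYPE('a::{finite,field}) 0 t l m = real (mu TYPE('a) t l m)"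
  unfolding Dn_def Ncnt_def mu_def' tau_def by simp

lemma tau_ccol:
  assumes "r \<le> l" "r \<le> k" "R \<in> carrier_mat (Suc l) k" "c \<in> carrier_vec (Suc l)"
  shows "tau (Suc r) (ccol c R) = c $ 0 + (\<Sum>i<r. R $$ (Suc i, i))"
  unfolding tau_def sum.lessThan_Suc_shift using assms by (auto simp: ccol_def intro!: sum.cong)

lemma tau_zrow:
  assumes "r \<le> l" "r \<le> k" "R \<in> carrier_mat l k"
  shows "(\<Sum>i<r. zrow R $$ (Suc i, i)) = tau r R"
  unfolding tau_def using assms by (auto simp: zrow_def intro!: sum.cong)

lemma img_first_zero:
  fixes R :: "'a::field mat"
  assumes "R \<in> carrier_mat l k" "c \<in> img (zrow R)"
  shows "c $ 0 = 0"
  using assms img_zrow[OF assms(1)] by auto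

lemma card_S_nonzero_row:
  fixes R :: "'a::{finite,field} mat"
  assumes R: "R \<in> carrier_mat (Suc l) k" and j: "j < k" "R $$ (0,j) \<noteq> 0"
  shows "card {c \<in> carrier_vec (Suc l). mat_rank (ccol c R) = t \<and> c $ 0 + x = a}
       \<le> card {c \<in> carrier_vec (Suc l). mat_rank (ccol c R) = t \<and> c $ 0 + x = b}"
proof -
  define w where "w = R *\<^sub>v unit_vec k j"
  have wimg: "w \<in> img R" unfolding w_def img_def using R by auto
  have wC: "w \<in> carrier_vec (Suc l)" using R unfolding w_def by auto
  have w0: "w $ 0 = R $$ (0,j)" unfolding w_def using R j by (simp add: row_def)
  define v where "v = ((b - a) / w $ 0) \<cdot>\<^sub>v w"
  have vimg: "v \<in> img R" unfolding v_def using img_smult[OF R wimg] .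
  have vC: "v \<in> carrier_vec (Suc l)" using wC unfolding v_def by simp
  have v0: "v $ 0 = b - a" unfolding v_def using wC j w0 by simp
  let ?f = "\<lambda>c. c + v"
  let ?A = "{c \<in> carrier_vec (Suc l). mat_rank (ccol c R) = t \<and> c $ 0 + x = a}"
  let ?B = "{c \<in> carrier_vec (Suc l). mat_rank (ccol c R) = t \<and> c $ 0 + x = b}"
  have inj: "inj_on ?f ?A"
  proof (rule inj_onI)
    fix c d assume c: "c \<in> ?A" and d: "d \<in> ?A" and e: "c + v = d + v"
    show "c = d"
    proof (rule eq_vecI)
      fix i assume "i < dim_vec d"
      then have i: "i < Suc l" using d by auto
      have "(c + v) $ i = (d + v) $ i" using e by simp
      then show "c $ i = d $ i" using i c d vC by auto
    qed (use c d in auto)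
  qed
  have sub: "?f ` ?A \<subseteq> ?B"
  proof
    fix y assume "y \<in> ?f ` ?A"
    then obtain c where c: "c \<in> ?A" and y: "y = c + v" by blast
    have cC: "c \<in> carrier_vec (Suc l)" using c by simp
    have yC: "y \<in> carrier_vec (Suc l)" using y cC vC by simp
    have "c \<in> img R \<longleftrightarrow> y \<in> img R"
    proof
      assume "c \<in> img R" then show "y \<in> img R" unfolding y using img_add[OF R _ vimg] by simp
    next
      assume "y \<in> img R"
      then have "y - v \<in> img R" using img_diff[OF R _ vimg] by simp
      moreover have "y - v = c" unfolding y using cC vC by (intro eq_vecI) auto
      ultimately show "c \<in> img R" by simp
    qed
    then have "mat_rank (ccol y R) = mat_rank (ccol c R)"
      using rank_ccol[OF R cC] rank_ccol[OF R yC] by simp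
    moreover have "y $ 0 + x = b"
    proof -
      have ca: "c $ 0 + x = a" using c by simp
      have "y $ 0 + x = (c $ 0 + x) + (b - a)" unfolding y using v0 vC by (simp add: algebra_simps)
      also have "\<dots> = b" using ca by simp
      finally show ?thesis .
    qed
    ultimately show "y \<in> ?B" using yC c by simp
  qed
  have fin: "finite ?B" by simp
  show ?thesis using card_inj_on_le[OF inj sub fin] .
qed

lemma card_S_zrow:
  fixes R :: "'a::{finite,field} mat"
  assumes R: "R \<in> carrier_mat l k"
  shows "real (card {c \<in> carrier_vec (Suc l). mat_rank (ccol c (zrow R)) = t \<and> c $ 0 + x = a}) =
    (if mat_rank R = t \<and> x = a then real (card (UNIV::'a set)) ^ t else 0) +
    (if Suc (mat_rank R) = t then real (card (UNIV::'a set)) ^ l -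
        (if x = a then real (card (UNIV::'a set)) ^ (t - 1) else 0) else 0)"
proof -
  let ?Q = "card (UNIV::'a set)"
  let ?R = "zrow R"
  have RR: "?R \<in> carrier_mat (Suc l) k" using R by simp
  have W: "img ?R \<subseteq> carrier_vec (Suc l)" using img_carrier[OF RR] .
  have finW: "finite (img ?R)" using finite_subset[OF W] by simp
  have rkR: "mat_rank ?R = mat_rank R" using rank_zrow[OF R] .
  have ci: "card (img ?R) = ?Q ^ mat_rank R" using card_img[OF RR] rkR by simp
  have z: "\<And>c. c \<in> img ?R \<Longrightarrow> c $ 0 = 0" using img_first_zero[OF R] by blast
  have rk: "\<And>c. c \<in> carrier_vec (Suc l) \<Longrightarrow> mat_rank (ccol c ?R) = (if c \<in> img ?R then mat_rank R else Suc (mat_rank R))"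
    using rank_ccol[OF RR] rkR by simp
  let ?S = "{c \<in> carrier_vec (Suc l). mat_rank (ccol c ?R) = t \<and> c $ 0 + x = a}"
  consider (a) "mat_rank R = t" | (b) "Suc (mat_rank R) = t" | (c) "mat_rank R \<noteq> t" "Suc (mat_rank R) \<noteq> t" by blast
  then show ?thesis
  proof cases
    case a
    then have "?S = (if x = a then img ?R else {})" using rk W z by (auto split: if_splits)
    then show ?thesis using a ci by simp
  next
    case b
    let ?V = "{c \<in> carrier_vec (Suc l). c $ 0 = a - x}"
    have S: "?S = ?V - img ?R" using rk W b by (auto split: if_splits simp: algebra_simps)
    have VW: "?V \<inter> img ?R = (if x = a then img ?R else {})" using W z by auto
    have cV: "card ?V = ?Q ^ l" by (rule card_vec_first)
    have "card ?S = card ?V - card (?V \<inter> img ?R)"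
      unfolding S by (rule card_Diff_subset_Int) (use finW in auto)
    moreover have "card (?V \<inter> img ?R) \<le> card ?V" by (rule card_mono) auto
    ultimately have "real (card ?S) = real (card ?V) - real (card (?V \<inter> img ?R))"
      by (simp add: of_nat_diff)
    then show ?thesis using b cV VW ci by auto
  next
    case c
    then have "?S = {}" using rk by (auto split: if_splits)
    then show ?thesis using c by simp
  qed
qed

lemma D_Suc:
  assumes rl: "r \<le> l" and rk: "r \<le> k"
  shows "Dn TYPE('a::{finite,field}) (Suc r) t (Suc l) (Suc k) =
    real (card (UNIV::'a set)) ^ t * Dn TYPE('a) r t l k -
    (if t = 0 then 0 else real (card (UNIV::'a set)) ^ (t - 1) * Dn TYPE('a) r (t - 1) l k)"
proof -
  let ?Q = "real (card (UNIV::'a set))"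
  let ?C' = "carrier_mat (Suc l) k :: 'a mat set"
  let ?C = "carrier_mat l k :: 'a mat set"
  define tp where "tp R = (\<Sum>i<r. R $$ (Suc i, i))" for R :: "'a mat"
  define S where "S a R = {c \<in> carrier_vec (Suc l). mat_rank (ccol c R) = t \<and> c $ 0 + tp R = a}"
    for a and R :: "'a mat"
  have N: "Ncnt TYPE('a) (Suc r) t (Suc l) (Suc k) a = (\<Sum>R\<in>?C'. card (S a R))" for a
    unfolding Ncnt_def card_split
  proof (rule sum.cong[OF refl])
    fix R assume R: "R \<in> ?C'"
    show "card {c \<in> carrier_vec (Suc l). mat_rank (ccol c R) = t \<and> tau (Suc r) (ccol c R) = a} = card (S a R)"
      unfolding S_def tp_def using tau_ccol[OF rl rk R] by (intro arg_cong[where f=card]) auto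
  qed
  define g where "g R = real (card (S 0 R)) - real (card (S 1 R))" for R
  have D1: "Dn TYPE('a) (Suc r) t (Suc l) (Suc k) = (\<Sum>R\<in>?C'. g R)"
    unfolding Dn_def N g_def by (simp add: sum_subtractf)
  have g0: "g R = 0" if R: "R \<in> ?C'" and nz: "\<not> (\<forall>j<k. R $$ (0,j) = 0)" for R
  proof -
    obtain j where j: "j < k" "R $$ (0,j) \<noteq> 0" using nz by blast
    have "card (S 0 R) \<le> card (S 1 R)" "card (S 1 R) \<le> card (S 0 R)"
      unfolding S_def using card_S_nonzero_row[OF R j] by blast+
    then show ?thesis unfolding g_def by simp
  qed
  have "(\<Sum>R\<in>?C'. g R) = (\<Sum>R\<in>?C'. if (\<forall>j<k. R $$ (0,j) = 0) then g R else 0)"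
    by (rule sum.cong) (auto simp: g0)
  also have "\<dots> = (\<Sum>R\<in>{R\<in>?C'. \<forall>j<k. R $$ (0,j) = 0}. g R)"
    by (rule sum.inter_filter[symmetric]) simp
  also have "\<dots> = (\<Sum>R\<in>zrow ` ?C. g R)" unfolding zrow_set ..
  also have "\<dots> = (\<Sum>R'\<in>?C. g (zrow R'))"
    by (rule sum.reindex_cong[OF _ refl refl]) (auto intro: inj_onI zrow_inj)
  finally have D2: "Dn TYPE('a) (Suc r) t (Suc l) (Suc k) = (\<Sum>R'\<in>?C. g (zrow R'))" using D1 by simp
  define h where "h R' = (if mat_rank R' = t \<and> tau r R' = 0 then ?Q ^ t else 0)
     - (if mat_rank R' = t \<and> tau r R' = 1 then ?Q ^ t else 0)
     - (if mat_rank R' = t - 1 \<and> t \<noteq> 0 \<and> tau r R' = 0 then ?Q ^ (t - 1) else 0)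
     + (if mat_rank R' = t - 1 \<and> t \<noteq> 0 \<and> tau r R' = 1 then ?Q ^ (t - 1) else 0)" for R' :: "'a mat"
  have gh: "g (zrow R') = h R'" if R': "R' \<in> ?C" for R'
  proof -
    have tp: "tp (zrow R') = tau r R'" unfolding tp_def using tau_zrow[OF rl rk R'] .
    show ?thesis unfolding g_def S_def tp card_S_zrow[OF R'] h_def by auto
  qed
  have "(\<Sum>R'\<in>?C. g (zrow R')) = (\<Sum>R'\<in>?C. h R')" by (rule sum.cong) (auto simp: gh)
  also have "\<dots> = real (card {R\<in>?C. mat_rank R = t \<and> tau r R = 0}) * ?Q ^ t
      - real (card {R\<in>?C. mat_rank R = t \<and> tau r R = 1}) * ?Q ^ t
      - real (card {R\<in>?C. mat_rank R = t - 1 \<and> t \<noteq> 0 \<and> tau r R = 0}) * ?Q ^ (t - 1)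
      + real (card {R\<in>?C. mat_rank R = t - 1 \<and> t \<noteq> 0 \<and> tau r R = 1}) * ?Q ^ (t - 1)"
    unfolding h_def sum.distrib sum_subtractf by (simp add: sum_if_const)
  also have "\<dots> = ?Q ^ t * Dn TYPE('a) r t l k -
    (if t = 0 then 0 else ?Q ^ (t - 1) * Dn TYPE('a) r (t - 1) l k)"
    unfolding Dn_def Ncnt_def by (auto simp: algebra_simps)
  finally show ?thesis using D2 by simp
qed

lemma N_le:
  assumes "r \<le> l" "r \<le> m" "b \<noteq> 0" "c \<noteq> 0"
  shows "Ncnt TYPE('a::{finite,field}) r t l m b \<le> Ncnt TYPE('a) r t l m c"
proof -
  let ?A = "{A \<in> (carrier_mat l m :: 'a mat set). mat_rank A = t \<and> tau r A = b}"
  let ?B = "{A \<in> (carrier_mat l m :: 'a mat set). mat_rank A = t \<and> tau r A = c}"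
  let ?f = "\<lambda>A. (c / b) \<cdot>\<^sub>m A"
  have cb: "c / b \<noteq> 0" using assms by simp
  have inj: "inj_on ?f ?A"
  proof (rule inj_onI)
    fix A B assume A: "A \<in> ?A" and B: "B \<in> ?A" and e: "?f A = ?f B"
    show "A = B"
    proof (rule eq_matI)
      fix i j assume "i < dim_row B" "j < dim_col B"
      then have ij: "i < l" "j < m" using B by auto
      have "?f A $$ (i,j) = ?f B $$ (i,j)" using e by simp
      moreover have "A \<in> carrier_mat l m" "B \<in> carrier_mat l m" using A B by auto
      ultimately have "(c / b) * A $$ (i,j) = (c / b) * B $$ (i,j)" using ij by simp
      then show "A $$ (i,j) = B $$ (i,j)" using cb by simp
    qed (use A B in auto)
  qed
  have sub: "?f ` ?A \<subseteq> ?B"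
  proof
    fix X assume "X \<in> ?f ` ?A"
    then obtain A where A: "A \<in> ?A" and X: "X = ?f A" by blast
    have "tau r X = (c / b) * tau r A"
      unfolding X tau_def sum_distrib_left using A assms by (auto intro!: sum.cong)
    then have "tau r X = c" using A assms by simp
    moreover have "mat_rank X = t" unfolding X using rank_smult[OF _ cb, of A l m] A by simp
    ultimately show "X \<in> ?B" using A X by simp
  qed
  show ?thesis unfolding Ncnt_def using card_inj_on_le[OF inj sub] by simp
qed

lemma N_eq1:
  assumes "r \<le> l" "r \<le> m" "a \<noteq> 0"
  shows "Ncnt TYPE('a::{finite,field}) r t l m a = Ncnt TYPE('a) r t l m 1"
  using N_le[OF assms(1,2) assms(3), of 1 t] N_le[OF assms(1,2) _ assms(3), of 1 t] by simp

lemma card_fiber_sum: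
  assumes "finite S" "finite B"
  shows "card {x\<in>S. f x \<in> B} = (\<Sum>b\<in>B. card {x\<in>S. f x = b})"
proof -
  have "{x\<in>S. f x \<in> B} = (\<Union>b\<in>B. {x\<in>S. f x = b})" by auto
  then show ?thesis using assms by (simp add: card_UN_disjoint disjoint_iff)
qed

lemma count_relation:
  assumes "r \<le> l" "r \<le> m"
  shows "real (wcount TYPE('a::{finite,field}) r t l m) =
    (real (card (UNIV::'a set)) - 1) / real (card (UNIV::'a set)) *
      (real (mu TYPE('a) t l m) - Dn TYPE('a) r t l m)"
proof -
  let ?Q = "card (UNIV::'a set)"
  let ?S = "{A \<in> (carrier_mat l m :: 'a mat set). mat_rank A = t}"
  have Q: "2 \<le> ?Q" using Q_ge2[where 'a='a] .
  have fS: "finite ?S" by simp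
  have w: "wcount TYPE('a) r t l m = card {A\<in>?S. tau r A \<in> UNIV - {0}}"
    unfolding wcount_def by (intro arg_cong[where f=card]) auto
  also have "\<dots> = (\<Sum>b\<in>UNIV - {0}. card {A\<in>?S. tau r A = b})"
    by (rule card_fiber_sum) auto
  also have "\<dots> = (\<Sum>b\<in>UNIV - {0::'a}. Ncnt TYPE('a) r t l m 1)"
    by (rule sum.cong[OF refl]) (use N_eq1[OF assms] in \<open>auto simp: Ncnt_def\<close>)
  also have "\<dots> = (?Q - 1) * Ncnt TYPE('a) r t l m 1"
    by (simp add: card_Diff_singleton)
  finally have w: "wcount TYPE('a) r t l m = (?Q - 1) * Ncnt TYPE('a) r t l m 1" .
  have "mu TYPE('a) t l m = card {A\<in>?S. tau r A \<in> UNIV}"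
    unfolding mu_def' by simp
  also have "\<dots> = (\<Sum>b\<in>UNIV. card {A\<in>?S. tau r A = b})"
    by (rule card_fiber_sum) auto
  also have "\<dots> = card {A\<in>?S. tau r A = 0} + (\<Sum>b\<in>UNIV - {0}. card {A\<in>?S. tau r A = b})"
    by (rule sum.remove) auto
  also have "(\<Sum>b\<in>UNIV - {0}. card {A\<in>?S. tau r A = b}) = (?Q - 1) * Ncnt TYPE('a) r t l m 1"
  proof -
    have "(\<Sum>b\<in>UNIV - {0}. card {A\<in>?S. tau r A = b}) = (\<Sum>b\<in>UNIV - {0::'a}. Ncnt TYPE('a) r t l m 1)"
      by (rule sum.cong[OF refl]) (use N_eq1[OF assms] in \<open>auto simp: Ncnt_def\<close>)
    then show ?thesis by (simp add: card_Diff_singleton)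
  qed
  finally have mu: "mu TYPE('a) t l m = Ncnt TYPE('a) r t l m 0 + (?Q - 1) * Ncnt TYPE('a) r t l m 1"
    by (simp add: Ncnt_def)
  have Q1: "real (?Q - 1) = real ?Q - 1" using Q by (simp add: of_nat_diff)
  show ?thesis unfolding w mu Dn_def using Q Q1 by (simp add: field_simps)
qed

lemma gfact_Suc: "gfact q (Suc n) = gfact q n * (q ^ Suc n - 1)"
  unfolding gfact_def by (simp add: prod.nat_ivl_Suc')

lemma gfact_pos: "1 < q \<Longrightarrow> 0 < gfact q n"
  unfolding gfact_def by (intro prod_pos) (auto simp: one_less_power)

lemma gbinom_nat: "gbinom q (int n) (int k) = (if k \<le> n then gfact q n / (gfact q k * gfact q (n - k)) else 0)"
  unfolding gbinom_def by (auto simp: nat_diff_distrib)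

lemma gbinom_neg[simp]: "k < 0 \<Longrightarrow> gbinom q n k = 0"
  unfolding gbinom_def by simp

lemma gbinom_out[simp]: "n < k \<Longrightarrow> gbinom q n k = 0"
  unfolding gbinom_def by simp

abbreviation B :: "real \<Rightarrow> nat \<Rightarrow> nat \<Rightarrow> real" where "B q n k \<equiv> gbinom q (int n) (int k)"

lemma gfact_0[simp]: "gfact q 0 = 1"
  unfolding gfact_def by simp

lemma B_0[simp]: "1 < q \<Longrightarrow> B q n 0 = 1"
  using gfact_pos[of q n] gbinom_nat[of q n 0] by simp

lemma B_same[simp]: "1 < q \<Longrightarrow> B q n n = 1"
  using gfact_pos[of q n] gbinom_nat[of q n n] by simp

lemma B_big: "n < k \<Longrightarrow> B q n k = 0"
  by (simp add: gbinom_nat)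

lemma alg_pascal:
  fixes G a b X Y :: real
  assumes "a > 0" "b > 0" "X > 1" "Y > 1"
  shows "G * (X * Y - 1) / ((a * (X - 1)) * (b * (Y - 1))) = G / (a * (b * (Y - 1))) + X * (G / ((a * (X - 1)) * b))"
proof -
  have x: "X - 1 \<noteq> 0" "Y - 1 \<noteq> 0" "a \<noteq> 0" "b \<noteq> 0" using assms by auto
  have "G / (a * (b * (Y - 1))) + X * (G / ((a * (X - 1)) * b)) =
    (G * (X - 1) + X * G * (Y - 1)) / ((a * (X - 1)) * (b * (Y - 1)))"
    using x by (simp add: add_divide_distrib diff_divide_distrib)
  also have "G * (X - 1) + X * G * (Y - 1) = G * (X * Y - 1)" by (simp add: algebra_simps)
  finally show ?thesis by simp
qed

lemma alg_ratio:
  fixes G a b X Y T :: real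
  assumes "a > 0" "b > 0" "X > 1" "Y > 1"
  shows "(X - 1) * (G / ((a * (X - 1)) * b)) * T = (T * Y - T) * (G / (a * (b * (Y - 1))))"
proof -
  have "X - 1 > 0" "Y - 1 > 0" using assms by auto
  then show ?thesis using assms by (simp add: field_simps)
qed

lemma qpascal:
  assumes q: "1 < q"
  shows "B q (Suc n) (Suc k) = B q n k + q ^ Suc k * B q n (Suc k)"
proof (cases "Suc k \<le> n")
  case True
  define d where "d = n - Suc k"
  have n: "n = k + Suc d" using True unfolding d_def by simp
  have g: "\<And>x. gfact q x > 0" using gfact_pos[OF q] .
  have e1: "gfact q (Suc n) = gfact q n * (q ^ Suc n - 1)" by (rule gfact_Suc)
  have e2: "gfact q (Suc k) = gfact q k * (q ^ Suc k - 1)" by (rule gfact_Suc)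
  have e3: "gfact q (Suc d) = gfact q d * (q ^ Suc d - 1)" by (rule gfact_Suc)
  have X: "q ^ Suc k > 1" "q ^ Suc d > 1"
    using one_less_power[OF q, of "Suc k"] one_less_power[OF q, of "Suc d"] by simp_all
  have qn: "q ^ Suc n = q ^ Suc k * q ^ Suc d" using n by (simp add: power_add[symmetric])
  have L: "B q (Suc n) (Suc k) = gfact q (Suc n) / (gfact q (Suc k) * gfact q (Suc d))"
    unfolding gbinom_nat using True n by simp
  have M1: "B q n k = gfact q n / (gfact q k * gfact q (Suc d))"
    unfolding gbinom_nat using n by simp
  have M2: "B q n (Suc k) = gfact q n / (gfact q (Suc k) * gfact q d)"
    unfolding gbinom_nat using n by simp
  show ?thesis unfolding L M1 M2 e1 e2 e3 qn
    by (rule alg_pascal[OF g g X])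
next
  case False
  then consider "n = k" | "n < k" by linarith
  then show ?thesis
  proof cases
    case 1 then show ?thesis using q B_same[OF q, of "Suc k"] B_same[OF q, of k] B_big[of k "Suc k" q] by simp
  next
    case 2 then show ?thesis by (simp add: B_big)
  qed
qed

lemma gb_ratio:
  assumes q: "1 < q"
  shows "(q ^ Suc t - 1) * B q l (Suc t) * q ^ t = (q ^ l - q ^ t) * B q l t"
proof (cases "Suc t \<le> l")
  case True
  define d where "d = l - Suc t"
  have l: "l = t + Suc d" using True unfolding d_def by simp
  have g: "\<And>x. gfact q x > 0" using gfact_pos[OF q] .
  have e2: "gfact q (Suc t) = gfact q t * (q ^ Suc t - 1)" by (rule gfact_Suc)
  have e3: "gfact q (Suc d) = gfact q d * (q ^ Suc d - 1)" by (rule gfact_Suc)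
  have X: "q ^ Suc t > 1" "q ^ Suc d > 1"
    using one_less_power[OF q, of "Suc t"] one_less_power[OF q, of "Suc d"] by simp_all
  have M1: "B q l (Suc t) = gfact q l / (gfact q (Suc t) * gfact q d)"
    unfolding gbinom_nat using l by simp
  have M2: "B q l t = gfact q l / (gfact q t * gfact q (Suc d))"
    unfolding gbinom_nat using l by simp
  have ql: "q ^ l = q ^ t * q ^ Suc d" using l by (simp add: power_add[symmetric])
  show ?thesis unfolding M1 M2 e2 e3 ql
    by (rule alg_ratio[OF g g X])
next
  case False
  then consider "l = t" | "l < t" by linarith
  then show ?thesis
  proof cases
    case 1 then show ?thesis using q B_big[of t "Suc t" q] by simp
  next
    case 2 then show ?thesis by (simp add: B_big)
  qed
qed

lemma zc2[simp]: "(0::nat) choose 2 = 0" by (simp add: numeral_2_eq_2)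

lemma gbinom_0_int[simp]: "1 < q \<Longrightarrow> 0 \<le> n \<Longrightarrow> gbinom q n 0 = 1"
  unfolding gbinom_def using gfact_pos[of q "nat n"] by simp

definition W :: "real \<Rightarrow> nat \<Rightarrow> nat \<Rightarrow> nat \<Rightarrow> nat \<Rightarrow> real" where
  "W q s r t n = q ^ (s choose 2) * q ^ (s * n) * q ^ ((t - s) choose 2) * B q r s * gbinom q (int n) (int t - int s)"

lemma W_zero: "s \<le> r \<Longrightarrow> r + n < t \<Longrightarrow> W q s r t n = 0"
  unfolding W_def by simp

lemma W_gt: "t < s \<Longrightarrow> W q s r t n = 0"
  unfolding W_def by simp

lemma W_t0: "1 < q \<Longrightarrow> W q s r 0 n = (if s = 0 then 1 else 0)"
  unfolding W_def by auto

lemma W_diag: "1 < q \<Longrightarrow> W q s r t 0 = (if s = t then q ^ (t choose 2) * B q r t else 0)"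
proof -
  assume q: "1 < q"
  consider "s = t" | "s < t" | "t < s" by linarith
  then show ?thesis
  proof cases
    case 1 then show ?thesis unfolding W_def using q by simp
  next
    case 2 then show ?thesis unfolding W_def by simp
  next
    case 3 then show ?thesis unfolding W_def by simp
  qed
qed

lemma choose2_Suc: "Suc k choose 2 = k + (k choose 2)"
  by (simp add: numeral_2_eq_2)

lemma W_rec:
  assumes q: "1 < q"
  shows "W q s r (Suc t) (Suc n) = q ^ Suc t * W q s r (Suc t) n + q ^ t * W q s r t n"
proof -
  consider "Suc t < s" | "s = Suc t" | "s \<le> t" by linarith
  then show ?thesis
  proof cases
    case 1 then show ?thesis by (simp add: W_gt)
  next
    case 2
    have "W q s r (Suc t) (Suc n) = q ^ (s choose 2) * q ^ (s * Suc n) * B q r s"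
      unfolding W_def using 2 q by simp
    moreover have "W q s r (Suc t) n = q ^ (s choose 2) * q ^ (s * n) * B q r s"
      unfolding W_def using 2 q by simp
    moreover have "W q s r t n = 0" using 2 by (simp add: W_gt)
    ultimately show ?thesis using 2 by (simp add: power_add algebra_simps)
  next
    case 3
    define k where "k = t - s"
    have t: "t = s + k" using 3 unfolding k_def by simp
    have d1: "int (Suc t) - int s = int (Suc k)" "int t - int s = int k" using t by auto
    have d2: "Suc t - s = Suc k" "t - s = k" using t by auto
    have P: "B q (Suc n) (Suc k) = B q n k + q ^ Suc k * B q n (Suc k)" using qpascal[OF q] .
    show ?thesis
      unfolding W_def d1 d2 P choose2_Suc unfolding t
      by (simp add: power_add algebra_simps)
  qed
qed

definition Xc :: "real \<Rightarrow> nat \<Rightarrow> nat \<Rightarrow> nat \<Rightarrow> nat \<Rightarrow> real" where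
  "Xc q r t l m = (\<Sum>s=0..r. (-1) ^ s * q ^ (s choose 2)
         * (gfact q (m - s) / gfact q (m - t))
         * q ^ (s * (l - r)) * q ^ ((t - s) choose 2)
         * gbinom q (int r) (int s) * gbinom q (int l - int r) (int t - int s))"

lemma Xc_W: "r \<le> l \<Longrightarrow> Xc q r t l m = (\<Sum>s=0..r. (-1) ^ s * (gfact q (m - s) / gfact q (m - t)) * W q s r t (l - r))"
  unfolding Xc_def W_def by (intro sum.cong) (auto simp: of_nat_diff)

lemma alg3:
  fixes a Z G sg W0 W1 P q :: real
  assumes "a > 0" "Z > 0"
  shows "sg * (G / a) * (q * P * W1 + P * W0) = q * P * (sg * (G / a) * W1) + (P * Z) * (sg * (G / (a * Z)) * W0)"
  using assms by (simp add: field_simps)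

lemma Xc_R3:
  assumes q: "1 < q" and rl: "r \<le> l" and lm: "Suc l \<le> m"
  shows "Xc q r t (Suc l) m = q ^ t * Xc q r t l m +
    (if t = 0 then 0 else (q ^ m - q ^ (t - 1)) * Xc q r (t - 1) l m)"
proof -
  define n where "n = l - r"
  have n1: "Suc l - r = Suc n" using rl unfolding n_def by simp
  have XS: "Xc q r t' (Suc l) m = (\<Sum>s=0..r. (-1) ^ s * (gfact q (m - s) / gfact q (m - t')) * W q s r t' (Suc n))" for t'
    using Xc_W[of r "Suc l" q t' m] rl n1 by simp
  have X0: "Xc q r t' l m = (\<Sum>s=0..r. (-1) ^ s * (gfact q (m - s) / gfact q (m - t')) * W q s r t' n)" for t'
    using Xc_W[of r l q t' m] rl unfolding n_def by simp
  show ?thesis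
  proof (cases t)
    case 0
    then show ?thesis unfolding XS X0 using W_t0[OF q] by simp
  next
    case (Suc u)
    show ?thesis
    proof (cases "Suc u \<le> m")
      case True
      define a where "a = gfact q (m - Suc u)"
      define Z where "Z = q ^ (m - u) - 1"
      have a: "a > 0" unfolding a_def using gfact_pos[OF q] .
      have Z: "Z > 0" unfolding Z_def using one_less_power[OF q, of "m - u"] True by simp
      have gu: "gfact q (m - u) = a * Z"
        unfolding a_def Z_def using gfact_Suc[of q "m - Suc u"] True by (simp add: Suc_diff_Suc)
      have qm: "q ^ m - q ^ u = q ^ u * Z"
        unfolding Z_def using True by (simp add: algebra_simps power_add[symmetric])
      have "Xc q r t (Suc l) m = (\<Sum>s=0..r. (-1) ^ s * (gfact q (m - s) / a) * (q * q ^ u * W q s r (Suc u) n + q ^ u * W q s r u n))"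
        unfolding XS Suc a_def W_rec[OF q] by simp
      also have "\<dots> = (\<Sum>s=0..r. q * q ^ u * ((-1) ^ s * (gfact q (m - s) / a) * W q s r (Suc u) n)
          + (q ^ u * Z) * ((-1) ^ s * (gfact q (m - s) / (a * Z)) * W q s r u n))"
        by (rule sum.cong[OF refl]) (rule alg3[OF a Z])
      also have "\<dots> = q ^ Suc u * Xc q r (Suc u) l m + (q ^ m - q ^ u) * Xc q r u l m"
        unfolding X0 qm gu a_def[symmetric] by (simp add: sum.distrib sum_distrib_left)
      finally show ?thesis using Suc by simp
    next
      case False
      have z1: "W q s r t (Suc n) = 0" "W q s r t n = 0" "W q s r u n = 0" if "s \<in> {0..r}" for s
        using that False lm rl Suc unfolding n_def by (auto intro!: W_zero)
      show ?thesis unfolding XS X0 using z1 Suc by simp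
    qed
  qed
qed

lemma Xc_diag:
  assumes q: "1 < q"
  shows "Xc q r t r m = (-1) ^ t * q ^ (t choose 2) * B q r t"
proof -
  have "Xc q r t r m = (\<Sum>s=0..r. (-1) ^ s * (gfact q (m - s) / gfact q (m - t)) * W q s r t 0)"
    using Xc_W[of r r q t m] by simp
  also have "\<dots> = (\<Sum>s=0..r. if s = t then (-1) ^ t * q ^ (t choose 2) * B q r t else 0)"
    using gfact_pos[OF q, of "m - t"] by (intro sum.cong) (auto simp: W_diag[OF q])
  also have "\<dots> = (-1) ^ t * q ^ (t choose 2) * B q r t"
    by (simp add: B_big)
  finally show ?thesis .
qed

lemma Xc_R1_diag:
  assumes q: "1 < q"
  shows "Xc q (Suc r) t (Suc r) (Suc m) = q ^ t * Xc q r t r m -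
    (if t = 0 then 0 else q ^ (t - 1) * Xc q r (t - 1) r m)"
proof (cases t)
  case 0
  then show ?thesis unfolding Xc_diag[OF q] using q by simp
next
  case (Suc u)
  have P: "B q (Suc r) (Suc u) = B q r u + q ^ Suc u * B q r (Suc u)" using qpascal[OF q] .
  show ?thesis unfolding Xc_diag[OF q] Suc P choose2_Suc
    by (simp add: power_add algebra_simps)
qed

lemma Xc_R1:
  assumes q: "1 < q" and rl: "r \<le> l" and lm: "l \<le> m"
  shows "Xc q (Suc r) t (Suc l) (Suc m) = q ^ t * Xc q r t l m -
    (if t = 0 then 0 else q ^ (t - 1) * Xc q r (t - 1) l m)"
proof -
  define d where "d = l - r"
  have "l = r + d" using rl unfolding d_def by simp
  then show ?thesis using lm
  proof (induction d arbitrary: l t m)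
    case 0
    then show ?case using Xc_R1_diag[OF q] by simp
  next
    case (Suc d)
    define l0 where "l0 = r + d"
    have l: "l = Suc l0" using Suc.prems unfolding l0_def by simp
    have l0m: "Suc l0 \<le> m" using Suc.prems l by simp
    have r0: "r \<le> l0" unfolding l0_def by simp
    have IH: "Xc q (Suc r) t' (Suc l0) (Suc m) = q ^ t' * Xc q r t' l0 m -
        (if t' = 0 then 0 else q ^ (t' - 1) * Xc q r (t' - 1) l0 m)" for t'
      using Suc.IH[of l0 m t'] l0m unfolding l0_def by simp
    have R3a: "Xc q (Suc r) t' (Suc (Suc l0)) (Suc m) = q ^ t' * Xc q (Suc r) t' (Suc l0) (Suc m) +
        (if t' = 0 then 0 else (q ^ Suc m - q ^ (t' - 1)) * Xc q (Suc r) (t' - 1) (Suc l0) (Suc m))" for t'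
      using Xc_R3[OF q, of "Suc r" "Suc l0" "Suc m" t'] r0 l0m by simp
    have R3b: "Xc q r t' (Suc l0) m = q ^ t' * Xc q r t' l0 m +
        (if t' = 0 then 0 else (q ^ m - q ^ (t' - 1)) * Xc q r (t' - 1) l0 m)" for t'
      using Xc_R3[OF q r0 l0m] by simp
    show ?case
    proof -
      consider "t = 0" | "t = 1" | u where "t = Suc (Suc u)" by (metis One_nat_def not0_implies_Suc)
      then show ?thesis
      proof cases
        case 1 then show ?thesis unfolding l R3a R3b IH by simp
      next
        case 2 then show ?thesis unfolding l R3a R3b IH by (simp add: algebra_simps)
      next
        case 3 then show ?thesis unfolding l R3a R3b IH by (simp add: algebra_simps)
      qed
    qed
  qed
qed

definition muc :: "real \<Rightarrow> nat \<Rightarrow> nat \<Rightarrow> nat \<Rightarrow> real" where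
  "muc q t l m = (\<Prod>i<t. q ^ m - q ^ i) * B q l t"

lemma muc_0: "1 < q \<Longrightarrow> muc q t l 0 = (if t = 0 then 1 else 0)"
proof (cases t)
  case (Suc u)
  have "(\<Prod>i<t. q ^ 0 - q ^ i) = 0" using Suc by (intro prod_zero bexI[of _ 0]) auto
  then show ?thesis unfolding muc_def using Suc by simp
qed (simp add: muc_def)

lemma prod_shift_q: "(\<Prod>i<t. (q::real) ^ Suc k - q ^ Suc i) = q ^ t * (\<Prod>i<t. q ^ k - q ^ i)"
proof -
  have "(\<Prod>i<t. q ^ Suc k - q ^ Suc i) = (\<Prod>i<t. q * (q ^ k - q ^ i))"
    by (rule prod.cong) (auto simp: right_diff_distrib)
  then show ?thesis by (simp add: prod.distrib)
qed

lemma muc_Suc: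
  assumes q: "1 < q"
  shows "muc q t l (Suc k) = q ^ t * muc q t l k +
    (if t = 0 then 0 else (q ^ l - q ^ (t - 1)) * muc q (t - 1) l k)"
proof (cases t)
  case 0 then show ?thesis unfolding muc_def using q by simp
next
  case (Suc u)
  define P where "P = (\<Prod>i<u. q ^ k - q ^ i)"
  have p1: "(\<Prod>i<Suc u. q ^ Suc k - q ^ i) = (q ^ Suc k - 1) * q ^ u * P"
    unfolding prod.lessThan_Suc_shift prod_shift_q P_def by simp
  have p2: "(\<Prod>i<Suc u. q ^ k - q ^ i) = P * (q ^ k - q ^ u)"
    unfolding P_def by simp
  have R: "(q ^ l - q ^ u) * B q l u = (q ^ Suc u - 1) * B q l (Suc u) * q ^ u"
    using gb_ratio[OF q] by simp
  have "muc q t l (Suc k) = (q ^ Suc k - 1) * q ^ u * P * B q l (Suc u)"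
    unfolding muc_def Suc p1 ..
  also have "\<dots> = q ^ Suc u * (P * (q ^ k - q ^ u) * B q l (Suc u)) + (q ^ Suc u - 1) * B q l (Suc u) * q ^ u * P"
    by (simp add: algebra_simps)
  also have "\<dots> = q ^ t * muc q t l k + (if t = 0 then 0 else (q ^ l - q ^ (t - 1)) * muc q (t - 1) l k)"
    unfolding muc_def Suc p2 R[symmetric] P_def by (simp add: algebra_simps)
  finally show ?thesis .
qed

lemma mu_closed:
  "real (mu TYPE('a::{finite,field}) t l m) = muc (real (card (UNIV::'a set))) t l m"
proof -
  let ?q = "real (card (UNIV::'a set))"
  have q: "1 < ?q" using Q_ge2[where 'a='a] by simp
  show ?thesis
  proof (induction m arbitrary: t)
    case 0 then show ?case using muc_0[OF q] mu_0[where 'a='a] by simp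
  next
    case (Suc m)
    then show ?case unfolding mu_Suc[where 'a='a] muc_Suc[OF q] by simp
  qed
qed

lemma prod_gfact:
  assumes "t \<le> m"
  shows "(\<Prod>i<t. q ^ m - q ^ i) * gfact q (m - t) = q ^ (t choose 2) * gfact q m"
  using assms
proof (induction t)
  case 0 then show ?case by simp
next
  case (Suc t)
  have g: "gfact q (m - t) = gfact q (m - Suc t) * (q ^ (m - t) - 1)"
    using gfact_Suc[of q "m - Suc t"] Suc.prems by (simp add: Suc_diff_Suc)
  have qm: "q ^ m - q ^ t = q ^ t * (q ^ (m - t) - 1)"
    using Suc.prems by (simp add: algebra_simps power_add[symmetric])
  have "(\<Prod>i<Suc t. q ^ m - q ^ i) * gfact q (m - Suc t) = q ^ t * ((\<Prod>i<t. q ^ m - q ^ i) * gfact q (m - t))"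
    unfolding prod.lessThan_Suc qm g by (simp add: algebra_simps)
  also have "\<dots> = q ^ (Suc t choose 2) * gfact q m"
    using Suc by (simp add: choose2_Suc power_add)
  finally show ?case .
qed

lemma Xc0:
  assumes q: "1 < q" and lm: "l \<le> m"
  shows "Xc q 0 t l m = muc q t l m"
proof (cases "t \<le> m")
  case True
  have "Xc q 0 t l m = gfact q m / gfact q (m - t) * q ^ (t choose 2) * B q l t"
    unfolding Xc_def using q by simp
  also have "\<dots> = muc q t l m"
    unfolding muc_def using prod_gfact[OF True, of q] gfact_pos[OF q, of "m - t"]
    by (simp add: field_simps)
  finally show ?thesis .
next
  case False
  then have "B q l t = 0" using lm by (simp add: B_big)
  then show ?thesis unfolding Xc_def muc_def by simp
qed

lemma D_closed:
  assumes "r \<le> l" "l \<le> m"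
  shows "Dn TYPE('a::{finite,field}) r t l m = Xc (real (card (UNIV::'a set))) r t l m"
  using assms
proof (induction r arbitrary: t l m)
  case 0
  have q: "1 < real (card (UNIV::'a set))" using Q_ge2[where 'a='a] by simp
  show ?case unfolding D_base mu_closed Xc0[OF q 0(2)] ..
next
  case (Suc r)
  have q: "1 < real (card (UNIV::'a set))" using Q_ge2[where 'a='a] by simp
  obtain l' where l: "l = Suc l'" using Suc.prems by (cases l) auto
  obtain m' where m: "m = Suc m'" using Suc.prems by (cases m) auto
  have h: "r \<le> l'" "l' \<le> m'" using Suc.prems l m by auto
  show ?case unfolding l m D_Suc[OF h(1) order.trans[OF h]] Suc.IH[OF h] Xc_R1[OF q h] ..
qed

lemma V_closed:
  assumes q: "1 < q"
  shows "(\<Sum>s=0..r. W q s r t n) = q ^ (t choose 2) * B q (r + n) t"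
proof (induction n arbitrary: t)
  case 0
  have "(\<Sum>s=0..r. W q s r t 0) = (\<Sum>s=0..r. if s = t then q ^ (t choose 2) * B q r t else 0)"
    by (rule sum.cong) (auto simp: W_diag[OF q])
  then show ?case by (simp add: B_big)
next
  case (Suc n)
  show ?case
  proof (cases t)
    case 0 then show ?thesis using q by (simp add: W_t0[OF q])
  next
    case (Suc u)
    have P: "B q (Suc (r + n)) (Suc u) = B q (r + n) u + q ^ Suc u * B q (r + n) (Suc u)"
      using qpascal[OF q] .
    have "(\<Sum>s=0..r. W q s r t (Suc n)) = q ^ Suc u * (\<Sum>s=0..r. W q s r (Suc u) n) + q ^ u * (\<Sum>s=0..r. W q s r u n)"
      unfolding Suc W_rec[OF q] by (simp add: sum.distrib sum_distrib_left)
    also have "\<dots> = q ^ (t choose 2) * B q (r + Suc n) t"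
      unfolding Suc.IH Suc using P by (simp add: choose2_Suc power_add algebra_simps)
    finally show ?thesis .
  qed
qed

lemma muc_alt:
  assumes q: "1 < q" and lm: "l \<le> m"
  shows "gfact q m / gfact q (m - t) * q ^ (t choose 2) * B q l t = muc q t l m"
proof -
  have "Xc q 0 t l m = gfact q m / gfact q (m - t) * q ^ (t choose 2) * B q l t"
    unfolding Xc_def using q by simp
  then show ?thesis using Xc0[OF q lm] by simp
qed

theorem mainTheorem17:
  fixes r t l m :: nat
  defines "q \<equiv> real (card (UNIV :: 'a::{finite,field} set))"
  assumes "1 \<le> t" "t \<le> l" "l \<le> m" "1 \<le> r" "r \<le> l"
  shows "real (wcount TYPE('a) r t l m) =
      (q - 1) / q * (\<Sum>s=1..r. q ^ (s choose 2)
         * (gfact q m / gfact q (m - t) - (-1) ^ s * gfact q (m - s) / gfact q (m - t))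
         * q ^ (s * (l - r)) * q ^ ((t - s) choose 2)
         * gbinom q (int r) (int s) * gbinom q (int l - int r) (int t - int s))
    \<and> real (wcount TYPE('a) r t l m) =
      (q - 1) / q * (real (mu TYPE('a) t l m) - (\<Sum>s=0..r. (-1) ^ s * q ^ (s choose 2)
         * (gfact q (m - s) / gfact q (m - t))
         * q ^ (s * (l - r)) * q ^ ((t - s) choose 2)
         * gbinom q (int r) (int s) * gbinom q (int l - int r) (int t - int s)))"
proof -
  have q: "1 < q" unfolding q_def using Q_ge2[where 'a='a] by simp
  have rl: "r \<le> l" and lm: "l \<le> m" using assms by auto
  have rm: "r \<le> m" using rl lm by simp
  have X: "(\<Sum>s=0..r. (-1) ^ s * q ^ (s choose 2)
         * (gfact q (m - s) / gfact q (m - t))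
         * q ^ (s * (l - r)) * q ^ ((t - s) choose 2)
         * gbinom q (int r) (int s) * gbinom q (int l - int r) (int t - int s)) = Xc q r t l m"
    unfolding Xc_def ..
  have D: "Dn TYPE('a) r t l m = Xc q r t l m" unfolding q_def using D_closed[OF rl lm] .
  have f2: "real (wcount TYPE('a) r t l m) = (q - 1) / q * (real (mu TYPE('a) t l m) - Xc q r t l m)"
    using count_relation[OF rl rm, of t, where 'a='a] D unfolding q_def by simp
  define F where "F s = q ^ (s choose 2)
         * (gfact q m / gfact q (m - t) - (-1) ^ s * gfact q (m - s) / gfact q (m - t))
         * q ^ (s * (l - r)) * q ^ ((t - s) choose 2)
         * gbinom q (int r) (int s) * gbinom q (int l - int r) (int t - int s)" for s
  define XT where "XT s = (-1) ^ s * q ^ (s choose 2)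
         * (gfact q (m - s) / gfact q (m - t))
         * q ^ (s * (l - r)) * q ^ ((t - s) choose 2)
         * gbinom q (int r) (int s) * gbinom q (int l - int r) (int t - int s)" for s
  have FW: "F s = gfact q m / gfact q (m - t) * W q s r t (l - r) - XT s" for s
    unfolding F_def XT_def W_def using rl by (simp add: of_nat_diff algebra_simps diff_divide_distrib)
  have F0: "F 0 = 0" unfolding F_def by simp
  have "(\<Sum>s=1..r. F s) = (\<Sum>s=0..r. F s)"
    using F0 by (simp add: sum.atLeast_Suc_atMost[of 0 r] Suc_le_eq assms)
  also have "\<dots> = gfact q m / gfact q (m - t) * (\<Sum>s=0..r. W q s r t (l - r)) - (\<Sum>s=0..r. XT s)"
    unfolding FW by (simp add: sum_subtractf sum_distrib_left)
  also have "\<dots> = real (mu TYPE('a) t l m) - Xc q r t l m"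
    unfolding V_closed[OF q] XT_def X using rl muc_alt[OF q lm, of t] mu_closed[where 'a='a, of t l m]
    unfolding q_def by (simp add: mult.assoc)
  finally have f1: "(\<Sum>s=1..r. F s) = real (mu TYPE('a) t l m) - Xc q r t l m" .
  show ?thesis unfolding X using f1 f2 unfolding F_def by simp
qed

end
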